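(* Fix $a>1$ and $n\ge2$. Let $\mathsf{F}$ be the $n\times n$ lower-triangular matrix with $(\mathsf{F})_{ii}=1$, $(\mathsf{F})_{i+1,i}=-a$, and all other entries $0$, and let $\mu_{n,1}\le\cdots\le\mu_{n,n}$ be the eigenvalues of $\mathsf{F}'\mathsf{F}$. Define $\xi_{n,i}=1+a^2-2a\cos\frac{i\pi}{n+1}$. Then for every $i=2,\ldots,n$, $$\xi_{n-1,i-1}\le\mu_{n,i}\le\xi_{n,i},$$ and the smallest eigenvalue satisfies $$2\log a+\frac{c_2}n\ge-\frac1n\log\mu_{n,1}\ge2\log a-\frac{c_1}n,$$ with $c_1=2\log(a+1)+\frac{a\pi}{a^2-1}$ and $c_2=2\log\frac a{a^2-1}+\frac{2a\pi}{a^2-1}$.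
   Context: Logarithms are natural. *)

theory Defs
  imports "Jordan_Normal_Form.Char_Poly" Complex_Main
begin

definition Fmat :: "real \<Rightarrow> nat \<Rightarrow> real mat" where
  "Fmat a n = mat n n (\<lambda>(i, j). if i = j then 1 else if i = j + 1 then - a else 0)"

definition sorted_eigenvalues :: "real mat \<Rightarrow> real list" where
  "sorted_eigenvalues A =
     (THE es. sorted es \<and> char_poly A = (\<Prod>e\<leftarrow>es. [:- e, 1:]))"

text \<open>mu n i (1-based i): the i-th smallest eigenvalue of F'F.\<close>
definition mu :: "real \<Rightarrow> nat \<Rightarrow> nat \<Rightarrow> real" where
  "mu a n i = sorted_eigenvalues (transpose_mat (Fmat a n) * Fmat a n) ! (i - 1)"

definition xi :: "real \<Rightarrow> nat \<Rightarrow> nat \<Rightarrow> real" where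
  "xi a n i = 1 + a^2 - 2 * a * cos (real i * pi / real (n + 1))"

end

theory Submission
  imports Defs
begin

definition G :: "nat \<Rightarrow> 'a::comm_ring_1 \<Rightarrow> 'a \<Rightarrow> 'a \<Rightarrow> 'a mat" where
  "G m D L b = mat m m (\<lambda>(i,j). if i = j then (if Suc i = m then L else D)
      else if i = Suc j \<or> j = Suc i then b else 0)"

lemma G_carrier[simp]: "G m D L b \<in> carrier_mat m m" by (simp add: G_def)

lemma det_G0: "det (G 0 D L b) = 1"
  by (simp add: G_def det_def)

lemma det_G1: "det (G 1 D L b) = L"
proof -
  have "det (G 1 D L b) = (\<Sum>j<1. G 1 D L b $$ (0,j) * cofactor (G 1 D L b) 0 j)"
    by (rule laplace_expansion_row) auto
  also have "\<dots> = L" by (simp add: G_def cofactor_def mat_delete_def det_def)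
  finally show ?thesis .
qed

lemma det_G_rec: "det (G (Suc (Suc m)) D L b) = L * det (G (Suc m) D D b) - b * b * det (G m D D b)"
proof -
  let ?A = "G (Suc (Suc m)) D L b"
  have "det ?A = (\<Sum>j<Suc (Suc m). ?A $$ (Suc m,j) * cofactor ?A (Suc m) j)"
    by (rule laplace_expansion_row) auto
  also have "\<dots> = ?A $$ (Suc m, Suc m) * cofactor ?A (Suc m) (Suc m) + ?A $$ (Suc m, m) * cofactor ?A (Suc m) m
     + (\<Sum>j<m. ?A $$ (Suc m,j) * cofactor ?A (Suc m) j)"
    by (simp add: algebra_simps)
  also have "(\<Sum>j<m. ?A $$ (Suc m,j) * cofactor ?A (Suc m) j) = 0"
    by (intro sum.neutral) (auto simp: G_def)
  finally have e1: "det ?A = ?A $$ (Suc m, Suc m) * cofactor ?A (Suc m) (Suc m) + ?A $$ (Suc m, m) * cofactor ?A (Suc m) m" by simp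
  have e2: "mat_delete ?A (Suc m) (Suc m) = G (Suc m) D D b"
    by (rule eq_matI) (auto simp: G_def mat_delete_def)
  have e3: "det (mat_delete ?A (Suc m) m) = b * det (G m D D b)"
  proof -
    let ?M = "mat_delete ?A (Suc m) m"
    have M: "?M \<in> carrier_mat (Suc m) (Suc m)" by (simp add: mat_delete_def G_def)
    have "det ?M = (\<Sum>i<Suc m. ?M $$ (i,m) * cofactor ?M i m)"
      by (rule laplace_expansion_column[OF M]) auto
    also have "\<dots> = ?M $$ (m,m) * cofactor ?M m m + (\<Sum>i<m. ?M $$ (i,m) * cofactor ?M i m)"
      by simp
    also have "(\<Sum>i<m. ?M $$ (i,m) * cofactor ?M i m) = 0"
      by (intro sum.neutral) (auto simp: G_def mat_delete_def)
    finally have f1: "det ?M = ?M $$ (m,m) * cofactor ?M m m" by simp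
    have f2: "mat_delete ?M m m = G m D D b"
      by (rule eq_matI) (auto simp: G_def mat_delete_def)
    have f3: "?M $$ (m,m) = b" by (simp add: G_def mat_delete_def)
    show ?thesis unfolding f1 cofactor_def f2 f3 by simp
  qed
  show ?thesis unfolding e1 cofactor_def e2 e3 by (simp add: G_def)
qed


lemma Fmat_carrier[simp]: "Fmat a n \<in> carrier_mat n n" by (simp add: Fmat_def)
lemma Fmat_dim[simp]: "dim_row (Fmat a n) = n" "dim_col (Fmat a n) = n" by (simp_all add: Fmat_def)

lemma sum_ob2: fixes n x y :: nat shows "(\<Sum>k\<in>{0..<n}. of_bool (k = x) * of_bool (k = y) :: real) = of_bool (x = y \<and> x < n)"
  by (induction n) auto

lemma FF_entry:
  assumes "i < n" "j < n"
  shows "(transpose_mat (Fmat a n) * Fmat a n) $$ (i,j) =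
    (if i = j then (if Suc i = n then 1 else 1 + a^2) else if i = Suc j \<or> j = Suc i then -a else 0)"
proof -
  have "(transpose_mat (Fmat a n) * Fmat a n) $$ (i,j) =
     (\<Sum>k\<in>{0..<n}. (of_bool (k = i) - a * of_bool (k = Suc i)) * (of_bool (k = j) - a * of_bool (k = Suc j)))"
    using assms by (auto simp: Fmat_def scalar_prod_def intro!: sum.cong)
  also have "\<dots> = (\<Sum>k\<in>{0..<n}. of_bool (k = i) * of_bool (k = j) - a * (of_bool (k = i) * of_bool (k = Suc j))
     - a * (of_bool (k = Suc i) * of_bool (k = j)) + a^2 * (of_bool (k = Suc i) * of_bool (k = Suc j)))"
    by (intro sum.cong) (auto simp: algebra_simps power2_eq_square)
  also have "\<dots> = (\<Sum>k\<in>{0..<n}. of_bool (k = i) * of_bool (k = j)) - a * (\<Sum>k\<in>{0..<n}. of_bool (k = i) * of_bool (k = Suc j))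
     - a * (\<Sum>k\<in>{0..<n}. of_bool (k = Suc i) * of_bool (k = j)) + a^2 * (\<Sum>k\<in>{0..<n}. of_bool (k = Suc i) * of_bool (k = Suc j))"
    by (simp only: sum.distrib sum_subtractf sum_distrib_left)
  also have "\<dots> = (if i = j then (if Suc i = n then 1 else 1 + a^2) else if i = Suc j \<or> j = Suc i then -a else 0)"
    using assms unfolding sum_ob2 by auto
  finally show ?thesis .
qed


definition Dp :: "real \<Rightarrow> real poly" where "Dp a = [:-(1+a^2), 1:]"
definition P :: "real \<Rightarrow> nat \<Rightarrow> real poly" where "P a m = det (G m (Dp a) (Dp a) [:a:])"
definition Q :: "real \<Rightarrow> nat \<Rightarrow> real poly" where "Q a m = det (G m (Dp a) [:-1,1:] [:a:])"

lemma char_poly_FF: "char_poly (transpose_mat (Fmat a n) * Fmat a n) = Q a n"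
proof -
  have "char_poly_matrix (transpose_mat (Fmat a n) * Fmat a n) = G n (Dp a) [:-1,1:] [:a:]"
  proof (rule eq_matI)
    fix i j assume ij: "i < dim_row (G n (Dp a) [:-1,1:] [:a:])" "j < dim_col (G n (Dp a) [:-1,1:] [:a:])"
    then have ij': "i < n" "j < n" by (auto simp: G_def)
    have e: "(transpose_mat (Fmat a n) * Fmat a n) $$ (i,j) =
      (if i = j then (if Suc i = n then 1 else 1 + a^2) else if i = Suc j \<or> j = Suc i then -a else 0)"
      by (rule FF_entry[OF ij'])
    have "char_poly_matrix (transpose_mat (Fmat a n) * Fmat a n) $$ (i,j)
       = (if i = j then [:0,1:] else 0) + [: - ((transpose_mat (Fmat a n) * Fmat a n) $$ (i,j)) :]"
      using ij' by (simp add: char_poly_matrix_def)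
    also have "\<dots> = G n (Dp a) [:-1,1:] [:a:] $$ (i,j)"
      unfolding e using ij' by (auto simp: G_def Dp_def)
    finally show "char_poly_matrix (transpose_mat (Fmat a n) * Fmat a n) $$ (i,j) = G n (Dp a) [:-1,1:] [:a:] $$ (i,j)" .
  qed (auto simp: char_poly_matrix_def G_def)
  then show ?thesis by (simp add: char_poly_def Q_def)
qed

lemma P0: "P a 0 = 1" by (simp add: P_def det_G0)
lemma P1: "P a 1 = Dp a" using det_G1[of "Dp a" "Dp a" "[:a:]"] by (simp add: P_def)
lemma P1'[simp]: "P a (Suc 0) = Dp a" using P1 by simp
lemma P_rec: "P a (Suc (Suc m)) = Dp a * P a (Suc m) - [:a:] * [:a:] * P a m"
  by (simp add: P_def det_G_rec)
lemma Q_rec: "Q a (Suc (Suc m)) = [:-1,1:] * P a (Suc m) - [:a:] * [:a:] * P a m"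
  by (simp add: P_def Q_def det_G_rec)

lemma poly_Q: "poly (Q a (Suc (Suc m))) x = poly (P a (Suc (Suc m))) x + a^2 * poly (P a (Suc m)) x"
  by (simp add: Q_rec P_rec Dp_def algebra_simps power2_eq_square)

lemma P_deg: "degree (P a m) = m \<and> coeff (P a m) m = 1"
proof (induction m rule: nat_less_induct)
  case (1 m)
  show ?case
  proof (cases m)
    case 0 then show ?thesis by (simp add: P0)
  next
    case (Suc k) note k = this
    show ?thesis
    proof (cases k)
      case 0 then show ?thesis using k by (simp add: P1 Dp_def)
    next
      case (Suc j)
      have IH1: "degree (P a (Suc j)) = Suc j" "coeff (P a (Suc j)) (Suc j) = 1" using 1 k Suc by auto
      have IH0: "degree (P a j) = j" using 1 k Suc by auto
      have nz: "P a (Suc j) \<noteq> 0" using IH1 by auto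
      have d1: "degree (Dp a * P a (Suc j)) = Suc (Suc j)"
        using nz IH1 by (subst degree_mult_eq) (auto simp: Dp_def)
      have d2: "degree (- ([:a:] * [:a:] * P a j)) < Suc (Suc j)"
        using IH0 degree_mult_le[of "[:a:] * [:a:]" "P a j"] degree_mult_le[of "[:a:]" "[:a:]"]
        unfolding degree_minus by auto
      have "degree (P a m) = Suc (Suc j)"
        unfolding k Suc P_rec diff_conv_add_uminus using d1 d2 by (simp only: degree_add_eq_left)
      moreover have "coeff (P a m) m = 1"
      proof -
        have "coeff (Dp a * P a (Suc j)) (Suc (Suc j)) = 1"
          using lead_coeff_mult[of "Dp a" "P a (Suc j)"] d1 IH1 by (simp add: Dp_def)
        moreover have "coeff ([:a:] * [:a:] * P a j) (Suc (Suc j)) = 0"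
          using d2 by (metis coeff_eq_0 degree_minus)
        ultimately show ?thesis unfolding k Suc P_rec by simp
      qed
      ultimately show ?thesis using k Suc by simp
    qed
  qed
qed

lemma P_sin:
  assumes "sin t \<noteq> 0"
  shows "poly (P a m) (1 + a^2 - 2*a*cos t) * sin t = (-a)^m * sin (real (Suc m) * t)
       \<and> poly (P a (Suc m)) (1 + a^2 - 2*a*cos t) * sin t = (-a)^(Suc m) * sin (real (Suc (Suc m)) * t)"
proof (induction m)
  case 0
  have h: "sin (real (Suc (Suc 0)) * t) = 2*sin t*cos t" using sin_double[of t] by simp
  show ?case unfolding h by (simp add: P0 Dp_def algebra_simps)
next
  case (Suc m)
  let ?x = "1 + a^2 - 2*a*cos t"
  have tri: "sin (real (Suc (Suc (Suc m))) * t) = 2 * cos t * sin (real (Suc (Suc m)) * t) - sin (real (Suc m) * t)"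
  proof -
    have "sin (real (Suc (Suc m)) * t + t) + sin (real (Suc (Suc m)) * t - t) = 2 * cos t * sin (real (Suc (Suc m)) * t)"
      by (simp add: sin_add sin_diff)
    moreover have "real (Suc (Suc m)) * t + t = real (Suc (Suc (Suc m))) * t" "real (Suc (Suc m)) * t - t = real (Suc m) * t"
      by (simp_all add: algebra_simps)
    ultimately show ?thesis by simp
  qed
  have "poly (P a (Suc (Suc m))) ?x * sin t = (-2*a*cos t) * (poly (P a (Suc m)) ?x * sin t) - a^2 * (poly (P a m) ?x * sin t)"
    by (simp add: P_rec Dp_def algebra_simps power2_eq_square)
  also have "\<dots> = (-a)^(Suc (Suc m)) * sin (real (Suc (Suc (Suc m))) * t)"
    using Suc.IH unfolding tri by (simp add: algebra_simps power2_eq_square)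
  finally show ?case using Suc.IH by simp
qed

lemma P_sin': "sin t \<noteq> 0 \<Longrightarrow> poly (P a m) (1 + a^2 - 2*a*cos t) * sin t = (-a)^m * sin (real (Suc m) * t)"
  using P_sin by blast

lemma P_at0: "poly (P a m) 0 * (a^2 - 1) = (-1)^m * (a^(2*m+2) - 1)
   \<and> poly (P a (Suc m)) 0 * (a^2 - 1) = (-1)^(Suc m) * (a^(2*(Suc m)+2) - 1)"
proof (induction m)
  case 0
  show ?case by (simp add: P0 P1 Dp_def algebra_simps power2_eq_square)
next
  case (Suc m)
  have "poly (P a (Suc (Suc m))) 0 * (a^2 - 1) = -(1+a^2) * (poly (P a (Suc m)) 0 * (a^2 - 1)) - a^2 * (poly (P a m) 0 * (a^2-1))"
    by (simp add: P_rec Dp_def algebra_simps power2_eq_square)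
  also have "\<dots> = -(1+a^2) * ((-1)^(Suc m) * (a^(2*(Suc m)+2) - 1)) - a^2 * ((-1)^m * (a^(2*m+2) - 1))"
    using Suc.IH by simp
  also have "\<dots> = (-1)^(Suc (Suc m)) * (a^(2*(Suc (Suc m))+2) - 1)"
    by (simp add: algebra_simps power2_eq_square power_add)
  finally show ?case using Suc.IH by simp
qed


lemma prod_lin: "degree (\<Prod>r\<leftarrow>rs. [:-r, 1::real:]) = length rs \<and> coeff (\<Prod>r\<leftarrow>rs. [:-r, 1::real:]) (length rs) = 1"
proof (induction rs)
  case Nil then show ?case by simp
next
  case (Cons r rs)
  let ?p = "\<Prod>r\<leftarrow>rs. [:-r, 1::real:]"
  have nz: "?p \<noteq> 0" using Cons by auto
  have d: "degree ([:-r,1:] * ?p) = Suc (length rs)"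
    using nz Cons by (subst degree_mult_eq) auto
  have "coeff ([:-r,1:] * ?p) (Suc (length rs)) = 1"
    using lead_coeff_mult[of "[:-r,1:]" ?p] d Cons by simp
  then show ?case using d by simp
qed

lemma poly_prod_lin_0: "poly (\<Prod>r\<leftarrow>rs. [:-r, 1::real:]) 0 = (-1)^length rs * prod_list rs"
  by (induction rs) auto

lemma monic_roots_eq_prod:
  fixes p :: "real poly"
  assumes "degree p = length rs" "coeff p (length rs) = 1" "distinct rs" "\<And>r. r \<in> set rs \<Longrightarrow> poly p r = 0"
  shows "p = (\<Prod>r\<leftarrow>rs. [:-r, 1:])"
proof (rule poly_eqI_degree_lead_coeff[where n = "length rs" and A = "set rs"])
  show "coeff p (length rs) = coeff (\<Prod>r\<leftarrow>rs. [:-r, 1:]) (length rs)" using assms prod_lin by simp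
  show "length rs \<le> card (set rs)" using distinct_card[OF assms(3)] by simp
  show "degree p \<le> length rs" using assms by simp
  show "degree (\<Prod>r\<leftarrow>rs. [:-r, 1:]) \<le> length rs" using prod_lin by simp
  fix z assume z: "z \<in> set rs"
  have "poly (\<Prod>r\<leftarrow>rs. [:-r, 1:]) z = 0"
    using z by (induction rs) auto
  then show "poly p z = poly (\<Prod>r\<leftarrow>rs. [:-r, 1:]) z" using assms z by simp
qed

lemma sorted_eigenvalues_eq:
  assumes "char_poly A = (\<Prod>r\<leftarrow>rs. [:-r, 1:])" "sorted rs" "distinct rs"
  shows "sorted_eigenvalues A = rs"
  unfolding sorted_eigenvalues_def
proof (rule the_equality)
  show "sorted rs \<and> char_poly A = (\<Prod>r\<leftarrow>rs. [:-r, 1:])" using assms by simp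
  fix es assume es: "sorted es \<and> char_poly A = (\<Prod>e\<leftarrow>es. [:-e, 1:])"
  then have eq: "(\<Prod>e\<leftarrow>es. [:-e, 1:]) = (\<Prod>r\<leftarrow>rs. [:-r, 1::real:])" using assms by simp
  have len: "length es = length rs" using arg_cong[OF eq, of degree] prod_lin by metis
  have sub: "set rs \<subseteq> set es"
  proof
    fix r assume r: "r \<in> set rs"
    have "poly (\<Prod>r\<leftarrow>rs. [:-r, 1::real:]) r = 0" using r by (induction rs) auto
    then have "poly (\<Prod>e\<leftarrow>es. [:-e, 1:]) r = 0" using eq by simp
    then show "r \<in> set es" by (induction es) auto
  qed
  have "card (set es) \<le> length es" by (rule card_length)
  also have "\<dots> = card (set rs)" using len assms distinct_card by metis
  finally have c: "card (set es) \<le> card (set rs)" .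
  have seq: "set rs = set es" using card_subset_eq[OF _ sub] c card_mono[OF _ sub] by auto
  have "distinct es" using c len assms by (metis card_distinct distinct_card le_antisym card_length seq)
  then show "es = rs" using es assms seq sorted_distinct_set_unique by metis
qed


lemma theta_bounds:
  assumes "1 \<le> j" "j \<le> m"
  shows "0 < real j * pi / real (Suc m)" "real j * pi / real (Suc m) < pi"
proof -
  show "0 < real j * pi / real (Suc m)" using assms by simp
  have "real j / real (Suc m) < 1" using assms by simp
  then have "real j / real (Suc m) * pi < 1 * pi" by (intro mult_strict_right_mono) auto
  then show "real j * pi / real (Suc m) < pi" by simp
qed

lemma theta_sin_pos:
  assumes "1 \<le> j" "j \<le> m"
  shows "sin (real j * pi / real (Suc m)) > 0"
  using theta_bounds[OF assms] sin_gt_zero by blast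

lemma xi_P_root:
  assumes "1 \<le> j" "j \<le> m"
  shows "poly (P a m) (xi a m j) = 0"
proof -
  let ?t = "real j * pi / real (Suc m)"
  have s: "sin ?t \<noteq> 0" using theta_sin_pos[OF assms] by simp
  have e: "real (Suc m) * ?t = real j * pi" by simp
  have "poly (P a m) (xi a m j) * sin ?t = 0"
    using P_sin'[OF s, of a m] unfolding e by (simp add: xi_def)
  then show ?thesis using s by simp
qed

lemma xi_mono:
  assumes "0 \<le> x" "x < y" "y \<le> pi" "a > 1"
  shows "1 + a^2 - 2*a*cos x < 1 + a^2 - 2*a*cos y"
  using cos_monotone_0_pi[OF assms(1-3)] assms(4) by simp

lemma xi_pos:
  assumes "a > 1" shows "xi a m j \<ge> (a - 1)^2"
proof -
  have "cos (real j * pi / real (m + 1)) \<le> 1" by simp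
  then have "2*a*cos (real j * pi / real (m + 1)) \<le> 2*a" using assms by simp
  then show ?thesis by (simp add: xi_def power2_eq_square algebra_simps)
qed

lemma xi_strict_mono:
  assumes "a > 1" "1 \<le> i" "i < j" "j \<le> m"
  shows "xi a m i < xi a m j"
proof -
  have "real i * pi / real (Suc m) < real j * pi / real (Suc m)"
    using assms by (simp add: divide_strict_right_mono)
  then show ?thesis unfolding xi_def using xi_mono[of "real i * pi / real (Suc m)" "real j * pi / real (Suc m)" a]
      theta_bounds[of j m] assms by simp
qed

lemma P_prod:
  assumes "a > 1"
  shows "P a m = (\<Prod>r\<leftarrow>map (xi a m) [1..<Suc m]. [:-r, 1:])"
proof (rule monic_roots_eq_prod)
  show "degree (P a m) = length (map (xi a m) [1..<Suc m])" using P_deg[of a m] by (simp del: upt_Suc)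
  show "coeff (P a m) (length (map (xi a m) [1..<Suc m])) = 1" using P_deg[of a m] by (simp del: upt_Suc)
  have "inj_on (xi a m) (set [1..<Suc m])"
    by (rule inj_onI) (metis atLeastLessThan_iff set_upt xi_strict_mono[OF assms] less_Suc_eq_le nat_neq_iff less_irrefl)
  then show "distinct (map (xi a m) [1..<Suc m])" by (simp add: distinct_map)
  fix r assume "r \<in> set (map (xi a m) [1..<Suc m])"
  then show "poly (P a m) r = 0" using xi_P_root by auto
qed

lemma xi_prod:
  assumes "a > 1"
  shows "(\<Prod>j=1..m. xi a m j) = (a^(2*m+2) - 1) / (a^2 - 1)"
proof -
  have a2: "a^2 - 1 > 0" using assms by (simp add: power2_eq_square) (metis less_1_mult)
  have "poly (P a m) 0 = (-1)^m * prod_list (map (xi a m) [1..<Suc m])"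
    using poly_prod_lin_0[of "map (xi a m) [1..<Suc m]"] P_prod[OF assms, of m] by (simp del: upt_Suc)
  also have "prod_list (map (xi a m) [1..<Suc m]) = (\<Prod>j=1..m. xi a m j)"
    by (subst prod.distinct_set_conv_list[symmetric]) (simp_all del: upt_Suc add: atLeastLessThanSuc_atLeastAtMost)
  finally have "(-1)^m * (\<Prod>j=1..m. xi a m j) * (a^2-1) = (-1)^m * (a^(2*m+2) - 1)"
    using P_at0[of a m] by simp
  then have "(\<Prod>j=1..m. xi a m j) * (a^2-1) = (a^(2*m+2) - 1)"
    by (simp add: mult.assoc)
  then show ?thesis using a2 by (simp add: field_simps)
qed


lemma aux_plus: "(d::real) \<noteq> 0 \<Longrightarrow> (d + 1) * (x / d) = x + x / d"
  by (simp add: field_simps)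
lemma aux_minus: "(d::real) \<noteq> 0 \<Longrightarrow> (d - 1) * (x / d) = x - x / d"
  by (simp add: field_simps)
lemma aux_cancel: "(s::real) \<noteq> 0 \<Longrightarrow> A * s = B * (c * s) \<Longrightarrow> A = B * c"
  by (metis mult.assoc mult_right_cancel)

lemma Q_at_s:
  assumes "1 \<le> j" "j \<le> Suc m"
  shows "poly (Q a (Suc (Suc m))) (xi a (Suc m) j) = (-1)^(m+j) * a^(Suc (Suc m))"
proof -
  let ?t = "real j * pi / real (Suc (Suc m))"
  have s: "sin ?t > 0" using theta_sin_pos[of j "Suc m"] assms by simp
  have x: "xi a (Suc m) j = 1 + a^2 - 2*a*cos ?t" by (simp add: xi_def)
  have r: "poly (P a (Suc m)) (xi a (Suc m) j) = 0" using xi_P_root assms by blast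
  have e: "real (Suc (Suc (Suc m))) * ?t = real j * pi + ?t"
    using aux_plus[of "real (Suc (Suc m))" "real j * pi"] by simp
  have "poly (P a (Suc (Suc m))) (xi a (Suc m) j) * sin ?t = (-a)^(Suc (Suc m)) * sin (real j * pi + ?t)"
    using P_sin'[of ?t a "Suc (Suc m)"] s unfolding x e by simp
  also have "sin (real j * pi + ?t) = (-1)^j * sin ?t" by (simp add: sin_add)
  finally have eq: "poly (P a (Suc (Suc m))) (xi a (Suc m) j) * sin ?t = (-a)^(Suc (Suc m)) * ((-1)^j * sin ?t)" .
  have "poly (P a (Suc (Suc m))) (xi a (Suc m) j) = (-a)^(Suc (Suc m)) * (-1)^j"
    by (rule aux_cancel[OF _ eq]) (use s in linarith)
  moreover have "(-a)^(Suc (Suc m)) = (-1)^m * a^(Suc (Suc m))" by (simp add: power_minus[of a])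
  ultimately have "poly (P a (Suc (Suc m))) (xi a (Suc m) j) = (-1)^(m+j) * a^(Suc (Suc m))"
    by (simp add: power_add)
  then show ?thesis using r by (simp add: poly_Q)
qed

lemma Q_at_t:
  assumes "1 \<le> j" "j \<le> Suc (Suc m)"
  shows "poly (Q a (Suc (Suc m))) (xi a (Suc (Suc m)) j) = (-1)^(m+j) * a^(Suc (Suc (Suc m)))"
proof -
  let ?t = "real j * pi / real (Suc (Suc (Suc m)))"
  have s: "sin ?t > 0" using theta_sin_pos[of j "Suc (Suc m)"] assms by simp
  have x: "xi a (Suc (Suc m)) j = 1 + a^2 - 2*a*cos ?t" by (simp add: xi_def)
  have r: "poly (P a (Suc (Suc m))) (xi a (Suc (Suc m)) j) = 0" using xi_P_root assms by blast
  have e: "real (Suc (Suc m)) * ?t = real j * pi - ?t"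
    using aux_minus[of "real (Suc (Suc (Suc m)))" "real j * pi"] by simp
  have "poly (P a (Suc m)) (xi a (Suc (Suc m)) j) * sin ?t = (-a)^(Suc m) * sin (real j * pi - ?t)"
    using P_sin'[of ?t a "Suc m"] s unfolding x e by simp
  also have "sin (real j * pi - ?t) = - ((-1)^j * sin ?t)" by (simp add: sin_diff)
  finally have eq: "poly (P a (Suc m)) (xi a (Suc (Suc m)) j) * sin ?t = (-a)^(Suc m) * (- ((-1)^j * sin ?t))" .
  have "poly (P a (Suc m)) (xi a (Suc (Suc m)) j) = (-a)^(Suc m) * (- ((-1)^j))"
    by (rule aux_cancel[OF _ eq[simplified mult_minus_left[symmetric]]]) (use s in linarith)
  moreover have "(-a)^(Suc m) = - ((-1)^m * a^(Suc m))" by (simp add: power_minus[of a])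
  ultimately have "poly (P a (Suc m)) (xi a (Suc (Suc m)) j) = (-1)^(m+j) * a^(Suc m)"
    by (simp add: power_add)
  then show ?thesis using r by (simp add: poly_Q power2_eq_square)
qed

lemma Q_at_0:
  assumes "a > 1"
  shows "poly (Q a (Suc (Suc m))) 0 = (-1)^m"
proof -
  have a2: "a^2 - 1 > 0" using assms by (simp add: power2_eq_square) (metis less_1_mult)
  have "poly (Q a (Suc (Suc m))) 0 * (a^2 - 1) = poly (P a (Suc (Suc m))) 0 * (a^2 - 1) + a^2 * (poly (P a (Suc m)) 0 * (a^2 - 1))"
    by (simp add: poly_Q algebra_simps)
  also have "\<dots> = (-1)^(Suc (Suc m)) * (a^(2*(Suc (Suc m))+2) - 1) + a^2 * ((-1)^(Suc m) * (a^(2*(Suc m)+2) - 1))"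
    using P_at0[of a "Suc m"] by simp
  also have "\<dots> = (-1)^m * (a^2 - 1)" by (simp add: algebra_simps power_add power2_eq_square)
  finally show ?thesis using a2 by simp
qed


lemma ln_div_pos: "0 < x \<Longrightarrow> 0 < y \<Longrightarrow> ln (x / y) = ln x - ln (y::real)" by (simp add: ln_div)
lemma ln_mult_pos: "0 < x \<Longrightarrow> 0 < y \<Longrightarrow> ln (x * y) = ln x + ln (y::real)" by (simp add: ln_mult)

lemma ln_quot_bound:
  assumes "a > (1::real)"
  shows "ln (a + 1) - ln (a - 1) \<le> 2 * a * pi / (a^2 - 1)"
proof -
  have a1: "a - 1 > 0" using assms by simp
  have "ln (a + 1) - ln (a - 1) = ln ((a + 1) / (a - 1))" using a1 by (simp add: ln_div)
  also have "\<dots> \<le> (a + 1) / (a - 1) - 1" using a1 by (intro ln_le_minus_one) simp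
  also have "\<dots> = 2 / (a - 1)" using a1 by (simp add: field_simps)
  also have "\<dots> \<le> 2 * a * pi / (a^2 - 1)"
  proof -
    have "a^2 - 1 = (a - 1) * (a + 1)" by (simp add: algebra_simps power2_eq_square)
    moreover have "2 * (a + 1) \<le> 2 * a * pi"
    proof -
      have "a * 2 \<le> a * pi" using pi_ge_two assms by (intro mult_left_mono) auto
      moreover have "2 * a * pi - 2 * (a + 1) = 2 * (a * pi - a * 2) + 2 * (a - 1)" by (simp add: algebra_simps)
      ultimately show ?thesis using assms by (smt (verit))
    qed
    ultimately have "2 * (a + 1) / (a^2 - 1) \<le> 2 * a * pi / (a^2 - 1)"
      using a1 by (intro divide_right_mono) auto
    moreover have "2 / (a - 1) = 2 * (a + 1) / (a^2 - 1)"
    proof -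
      have "a + 1 \<noteq> 0" using assms by simp
      then have "2 * (a + 1) / ((a - 1) * (a + 1)) = 2 / (a - 1)"
        by (metis mult_divide_mult_cancel_right)
      then show ?thesis unfolding \<open>a^2 - 1 = (a - 1) * (a + 1)\<close> by simp
    qed
    ultimately show ?thesis by simp
  qed
  finally show ?thesis .
qed

lemma final_upper:
  fixes a R Pi :: real and n :: nat
  assumes a: "a > 1" and n: "n \<ge> 2" and R: "R > 0" and RP: "R * Pi = 1"
    and Pl: "Pi \<ge> (a^(2*n) - 1) / (a^2 - 1)"
  shows "- (1 / real n) * ln R \<ge> 2 * ln a - (2 * ln (a + 1) + a * pi / (a^2 - 1)) / real n"
proof -
  have a2: "a^2 - 1 > 0" using a by (simp add: power2_eq_square) (metis less_1_mult)
  have an: "a^(2*n) > 1" using a n by (simp add: one_less_power)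
  have "(a^(2*n) - 1) / (a^2 - 1) > 0" using an a2 by simp
  then have Pp: "Pi > 0" using Pl by linarith
  have "R = 1 / Pi" using RP Pp by (simp add: field_simps)
  also have "\<dots> \<le> 1 / ((a^(2*n) - 1) / (a^2 - 1))"
    using Pl an a2 Pp by (intro divide_left_mono mult_pos_pos) auto
  also have "\<dots> = (a^2 - 1) / (a^(2*n) - 1)" by simp
  also have "\<dots> \<le> (a + 1)^2 / a^(2*n)"
  proof -
    have "a^1 \<le> a^(2*n)" using a n by (intro power_increasing) auto
    then have A: "2 * a^(2*n) - a - 1 \<ge> 0" using a by simp
    have "(a + 1)^2 * (a^(2*n) - 1) - (a^2 - 1) * a^(2*n) = (a + 1) * (2 * a^(2*n) - a - 1)"
      by (simp add: algebra_simps power2_eq_square)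
    also have "\<dots> \<ge> 0" using A a by simp
    finally have "(a^2 - 1) * a^(2*n) \<le> (a + 1)^2 * (a^(2*n) - 1)" by simp
    then show ?thesis using an a by (simp add: field_simps)
  qed
  finally have Rle: "R \<le> (a + 1)^2 / a^(2*n)" .
  have "ln R \<le> ln ((a + 1)^2 / a^(2*n))" using Rle R by simp
  also have "\<dots> = 2 * ln (a + 1) - real (2*n) * ln a" using a by (simp add: ln_div ln_realpow)
  finally have "ln R \<le> 2 * ln (a + 1) - 2 * real n * ln a" by simp
  moreover have "a * pi / (a^2 - 1) \<ge> 0" using a a2 by simp
  ultimately have "- ln R \<ge> 2 * real n * ln a - (2 * ln (a + 1) + a * pi / (a^2 - 1))" by linarith
  then have "- ln R / real n \<ge> (2 * real n * ln a - (2 * ln (a + 1) + a * pi / (a^2 - 1))) / real n"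
    using n by (intro divide_right_mono) auto
  then show ?thesis using n by (simp add: field_simps)
qed

lemma final_lower:
  fixes a R Pi T1 :: real and n :: nat
  assumes a: "a > 1" and n: "n \<ge> 2" and R: "R > 0" and RP: "R * Pi = 1"
    and Pu: "Pi * T1 \<le> (a^(2*n+2) - 1) / (a^2 - 1)" and T1: "T1 \<ge> (a - 1)^2"
  shows "2 * ln a + (2 * ln (a / (a^2 - 1)) + 2 * a * pi / (a^2 - 1)) / real n \<ge> - (1 / real n) * ln R"
proof -
  have a2: "a^2 - 1 > 0" using a by (simp add: power2_eq_square) (metis less_1_mult)
  have a1: "(a - 1)^2 > 0" using a by simp
  have Pp: "Pi > 0" using RP R zero_less_mult_iff[of R Pi] by auto
  have "Pi * (a - 1)^2 \<le> Pi * T1" using T1 Pp by simp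
  also have "\<dots> \<le> (a^(2*n+2) - 1) / (a^2 - 1)" by (rule Pu)
  also have "\<dots> \<le> a^(2*n+2) / (a^2 - 1)" using a2 by (simp add: divide_right_mono)
  finally have "Pi \<le> a^(2*n+2) / ((a^2 - 1) * (a - 1)^2)" using a1 a2 by (simp add: field_simps)
  moreover have "a^(2*n+2) / ((a^2 - 1) * (a - 1)^2) > 0" using a a1 a2 by simp
  ultimately have "1 / Pi \<ge> 1 / (a^(2*n+2) / ((a^2 - 1) * (a - 1)^2))"
    using Pp by (intro divide_left_mono mult_pos_pos) auto
  moreover have "R = 1 / Pi" using RP Pp by (simp add: field_simps)
  ultimately have Rge: "R \<ge> (a^2 - 1) * (a - 1)^2 / a^(2*n+2)" by simp
  have pos: "(a^2 - 1) * (a - 1)^2 / a^(2*n+2) > 0" using a1 a2 a by simp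
  have "ln R \<ge> ln ((a^2 - 1) * (a - 1)^2 / a^(2*n+2))" using Rge pos by simp
  moreover have "ln ((a^2 - 1) * (a - 1)^2 / a^(2*n+2)) = ln (a^2 - 1) + 2 * ln (a - 1) - real (2*n+2) * ln a"
  proof -
    have p0: "ln ((a^2 - 1) * (a - 1)^2 / a^(2*n+2)) = ln ((a^2 - 1) * (a - 1)^2) - ln (a^(2*n+2))"
      using a1 a2 a by (intro ln_div_pos mult_pos_pos) auto
    have p1: "ln ((a^2 - 1) * (a - 1)^2) = ln (a^2 - 1) + ln ((a - 1)^2)"
      using a1 a2 by (intro ln_mult_pos) auto
    have p2: "ln ((a - 1)^2) = 2 * ln (a - 1)" using a by (simp add: ln_realpow)
    have p3: "ln (a^(2*n+2)) = real (2*n+2) * ln a" by (rule ln_realpow)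
    show ?thesis unfolding p0 p1 p2 p3 by simp
  qed
  moreover have "ln (a^2 - 1) = ln (a - 1) + ln (a + 1)"
  proof -
    have "a^2 - 1 = (a - 1) * (a + 1)" by (simp add: algebra_simps power2_eq_square)
    then show ?thesis using a by (simp add: ln_mult_pos)
  qed
  moreover have "ln (a / (a^2 - 1)) = ln a - ln (a^2 - 1)" using a a2 by (intro ln_div_pos) auto
  moreover note ln_quot_bound[OF a]
  ultimately have "- ln R \<le> 2 * real n * ln a + (2 * ln (a / (a^2 - 1)) + 2 * a * pi / (a^2 - 1))"
    by (simp add: algebra_simps)
  then have "- ln R / real n \<le> (2 * real n * ln a + (2 * ln (a / (a^2 - 1)) + 2 * a * pi / (a^2 - 1))) / real n"
    using n by (intro divide_right_mono) auto
  then show ?thesis using n by (simp add: field_simps)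
qed


lemma neg1_prod: "(-1::real)^k * (-1)^(Suc k) = -1"
  by (induction k) auto

lemma theta_lt1:
  assumes "1 \<le> i" "i \<le> Suc m"
  shows "real i * pi / real (Suc (Suc m)) < real (Suc i) * pi / real (Suc (Suc (Suc m)))"
proof -
  have "real i * real (Suc (Suc (Suc m))) < real (Suc i) * real (Suc (Suc m))"
    using assms by (simp add: algebra_simps)
  then have "real i / real (Suc (Suc m)) < real (Suc i) / real (Suc (Suc (Suc m)))"
    by (simp add: field_simps)
  then show ?thesis by (simp add: divide_strict_right_mono mult.commute[of _ pi] times_divide_eq_right[symmetric] del: times_divide_eq_right of_nat_Suc)
qed

lemma theta_lt2:
  assumes "1 \<le> i"
  shows "real i * pi / real (Suc (Suc (Suc m))) < real i * pi / real (Suc (Suc m))"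
  using assms by (intro divide_strict_left_mono) auto

lemma incr_chain:
  fixes r :: "nat \<Rightarrow> real"
  assumes "\<And>i. 1 \<le> i \<Longrightarrow> i < n \<Longrightarrow> r i < r (Suc i)"
  shows "1 \<le> i \<Longrightarrow> i < j \<Longrightarrow> j \<le> n \<Longrightarrow> r i < r j"
proof (induction j)
  case 0 then show ?case by simp
next
  case (Suc j)
  show ?case
  proof (cases "i = j")
    case True then show ?thesis using assms Suc by auto
  next
    case False
    then have "r i < r j" using Suc by auto
    also have "r j < r (Suc j)" using assms Suc False by auto
    finally show ?thesis .
  qed
qed


theorem lemma5:
  fixes a :: real and n :: nat
  assumes "a > 1" and "n \<ge> 2"
  defines "c1 \<equiv> 2 * ln (a + 1) + a * pi / (a^2 - 1)"
      and "c2 \<equiv> 2 * ln (a / (a^2 - 1)) + 2 * a * pi / (a^2 - 1)"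
  shows "(\<forall>i \<in> {2..n}. xi a (n - 1) (i - 1) \<le> mu a n i \<and> mu a n i \<le> xi a n i)
       \<and> 2 * ln a + c2 / real n \<ge> - (1 / real n) * ln (mu a n 1)
       \<and> - (1 / real n) * ln (mu a n 1) \<ge> 2 * ln a - c1 / real n"
proof -
  have a: "a > 1" by fact
  define m where "m = n - 2"
  have nm: "n = Suc (Suc m)" using assms(2) m_def by simp
  define t where "t j = xi a n j" for j
  define s where "s j = xi a (Suc m) j" for j
  define lo where "lo j = (if j = 1 then 0 else s (j - 1))" for j
  have a1: "(a - 1)^2 > 0" using a by simp
  have tpos: "t j > 0" for j using xi_pos[OF a, of n j] a1 unfolding t_def by linarith
  have spos: "s j > 0" for j using xi_pos[OF a, of "Suc m" j] a1 unfolding s_def by linarith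
  have ex: "\<forall>j\<in>{1..n}. \<exists>x. lo j < x \<and> x < t j \<and> poly (Q a n) x = 0"
  proof
    fix j assume j: "j \<in> {1..n}"
    show "\<exists>x. lo j < x \<and> x < t j \<and> poly (Q a n) x = 0"
    proof (cases "j = 1")
      case True
      have q0: "poly (Q a n) 0 = (-1)^m" unfolding nm by (rule Q_at_0[OF a])
      have qt: "poly (Q a n) (t 1) = (-1)^(Suc m) * a^(Suc (Suc (Suc m)))"
        unfolding nm t_def using Q_at_t[of 1 m a] by simp
      have "poly (Q a n) 0 * poly (Q a n) (t 1) = ((-1)^m * (-1)^(Suc m)) * a^(Suc (Suc (Suc m)))"
        unfolding q0 qt by (simp only: mult.assoc)
      also have "\<dots> < 0" unfolding neg1_prod using a by simp
      finally obtain x where "0 < x" "x < t 1" "poly (Q a n) x = 0"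
        using poly_IVT[OF tpos[of 1]] by blast
      then show ?thesis using True by (auto simp: lo_def)
    next
      case False
      then obtain i where i: "j = Suc i" "1 \<le> i" "i \<le> Suc m" using j nm by (cases j) auto
      have lo: "lo j = s i" using i by (simp add: lo_def)
      have st: "s i < t (Suc i)"
      proof -
        have "1 + a^2 - 2*a*cos (real i * pi / real (Suc (Suc m))) < 1 + a^2 - 2*a*cos (real (Suc i) * pi / real (Suc (Suc (Suc m))))"
          using xi_mono[OF _ theta_lt1[OF i(2,3)] _ a] theta_bounds[of "Suc i" "Suc (Suc m)"] i by simp
        then show ?thesis unfolding s_def t_def nm xi_def by simp
      qed
      have qs: "poly (Q a n) (s i) = (-1)^(m+i) * a^(Suc (Suc m))"
        unfolding nm s_def using Q_at_s[OF i(2,3)] by simp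
      have qt: "poly (Q a n) (t (Suc i)) = (-1)^(Suc (m+i)) * a^(Suc (Suc (Suc m)))"
        unfolding nm t_def using Q_at_t[of "Suc i" m a] i by simp
      have "poly (Q a n) (s i) * poly (Q a n) (t (Suc i)) = ((-1)^(m+i) * (-1)^(Suc (m+i))) * (a^(Suc (Suc m)) * a^(Suc (Suc (Suc m))))"
        unfolding qs qt by (simp only: mult.assoc mult.left_commute)
      also have "\<dots> < 0" unfolding neg1_prod using a by simp
      finally obtain x where "s i < x" "x < t (Suc i)" "poly (Q a n) x = 0"
        using poly_IVT[OF st] by blast
      then show ?thesis using lo i by auto
    qed
  qed
  then obtain r where r: "\<And>j. j \<in> {1..n} \<Longrightarrow> lo j < r j \<and> r j < t j \<and> poly (Q a n) (r j) = 0"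
    by metis
  have step: "r i < r (Suc i)" if i: "1 \<le> i" "i < n" for i
  proof -
    have "r i < t i" using r[of i] i by auto
    also have "t i < s i"
    proof -
      have "1 + a^2 - 2*a*cos (real i * pi / real (Suc (Suc (Suc m)))) < 1 + a^2 - 2*a*cos (real i * pi / real (Suc (Suc m)))"
        using xi_mono[OF _ theta_lt2[OF i(1)] _ a] theta_bounds[of i "Suc m"] i nm by simp
      then show ?thesis unfolding s_def t_def nm xi_def by simp
    qed
    also have "s i < r (Suc i)" using r[of "Suc i"] i by (auto simp: lo_def)
    finally show ?thesis .
  qed
  have incr: "\<And>i j. 1 \<le> i \<Longrightarrow> i < j \<Longrightarrow> j \<le> n \<Longrightarrow> r i < r j"
    using incr_chain[of n r] step by blast
  define rs where "rs = map r [1..<Suc n]"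
  have len: "length rs = n" by (simp add: rs_def)
  have nth: "rs ! k = r (Suc k)" if "k < n" for k using that by (simp add: rs_def nth_upt del: upt_Suc)
  have sw: "sorted_wrt (<) rs"
    unfolding sorted_wrt_iff_nth_less len using nth incr by auto
  then have srt: "sorted rs" and dst: "distinct rs" by (auto simp: strict_sorted_iff)
  have FF: "transpose_mat (Fmat a n) * Fmat a n \<in> carrier_mat n n" by (rule mult_carrier_mat[of _ n n]) auto
  have Qeq: "Q a n = (\<Prod>x\<leftarrow>rs. [:-x, 1:])"
  proof (rule monic_roots_eq_prod)
    show "degree (Q a n) = length rs" "coeff (Q a n) (length rs) = 1"
      using degree_monic_char_poly[OF FF] char_poly_FF len by auto
    show "distinct rs" by (rule dst)
    fix x assume "x \<in> set rs"
    then show "poly (Q a n) x = 0" using r by (auto simp: rs_def)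
  qed
  have ev: "sorted_eigenvalues (transpose_mat (Fmat a n) * Fmat a n) = rs"
    using sorted_eigenvalues_eq[OF _ srt dst] char_poly_FF Qeq by simp
  have mu: "mu a n i = r i" if "1 \<le> i" "i \<le> n" for i
    using that nth[of "i - 1"] by (simp add: mu_def ev)
  have part1: "\<forall>i \<in> {2..n}. xi a (n - 1) (i - 1) \<le> mu a n i \<and> mu a n i \<le> xi a n i"
  proof
    fix i assume i: "i \<in> {2..n}"
    then have "lo i < r i \<and> r i < t i" using r[of i] by auto
    moreover have "lo i = xi a (n - 1) (i - 1)" using i nm by (simp add: lo_def s_def)
    ultimately show "xi a (n - 1) (i - 1) \<le> mu a n i \<and> mu a n i \<le> xi a n i"
      using mu[of i] i by (auto simp: t_def)
  qed
  have "poly (Q a n) 0 = (-1)^n * prod_list rs" unfolding Qeq poly_prod_lin_0 len ..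
  moreover have "poly (Q a n) 0 = (-1)^m" unfolding nm by (rule Q_at_0[OF a])
  ultimately have pl: "prod_list rs = 1" using nm by simp
  have pl2: "prod_list rs = (\<Prod>j=1..n. r j)" unfolding rs_def
    by (subst prod.distinct_set_conv_list[symmetric]) (simp_all del: upt_Suc add: atLeastLessThanSuc_atLeastAtMost)
  define Pi where "Pi = (\<Prod>i=1..Suc m. r (Suc i))"
  have split: "(\<Prod>j=1..n. g j) = g 1 * (\<Prod>i=1..Suc m. g (Suc i))" for g :: "nat \<Rightarrow> real"
  proof -
    have "(\<Prod>j=1..n. g j) = g 1 * (\<Prod>j=Suc 1..Suc (Suc m). g j)" using nm by (simp add: prod.atLeast_Suc_atMost)
    also have "(\<Prod>j=Suc 1..Suc (Suc m). g j) = (\<Prod>i=1..Suc m. g (Suc i))" by (rule prod.shift_bounds_cl_Suc_ivl)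
    finally show ?thesis .
  qed
  have RP: "r 1 * Pi = 1" using pl pl2 split[of r] by (simp add: Pi_def)
  have R: "r 1 > 0" using r[of 1] nm by (simp add: lo_def)
  have rs_ge: "s i < r (Suc i)" "r (Suc i) < t (Suc i)" if "i \<in> {1..Suc m}" for i
    using r[of "Suc i"] that nm by (auto simp: lo_def)
  have Pl: "Pi \<ge> (a^(2*n) - 1) / (a^2 - 1)"
  proof -
    have "(\<Prod>i=1..Suc m. s i) \<le> Pi" unfolding Pi_def
      using rs_ge spos by (intro prod_mono) (auto intro: less_imp_le)
    moreover have "(\<Prod>i=1..Suc m. s i) = (a^(2*n) - 1) / (a^2 - 1)"
      unfolding s_def xi_prod[OF a] nm by simp
    ultimately show ?thesis by simp
  qed
  have Pu: "Pi * t 1 \<le> (a^(2*n+2) - 1) / (a^2 - 1)"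
  proof -
    have h: "0 \<le> r (Suc i) \<and> r (Suc i) \<le> t (Suc i)" if "i \<in> {1..Suc m}" for i
      using rs_ge[OF that] spos[of i] by linarith
    have "Pi \<le> (\<Prod>i=1..Suc m. t (Suc i))" unfolding Pi_def
      using h by (intro prod_mono) auto
    then have "Pi * t 1 \<le> t 1 * (\<Prod>i=1..Suc m. t (Suc i))" using tpos[of 1] by (simp add: mult.commute)
    also have "\<dots> = (\<Prod>j=1..n. t j)" by (rule split[symmetric])
    also have "\<dots> = (a^(2*n+2) - 1) / (a^2 - 1)" unfolding t_def xi_prod[OF a] by simp
    finally show ?thesis .
  qed
  have T1: "t 1 \<ge> (a - 1)^2" unfolding t_def by (rule xi_pos[OF a])
  have m1: "mu a n 1 = r 1" using mu[of 1] nm by simp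
  show ?thesis
    unfolding c1_def c2_def m1
    using part1 final_upper[OF a assms(2) R RP Pl] final_lower[OF a assms(2) R RP Pu T1] by simp
qed

end
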